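(* Let $A=\{[x_i^a,y_i^a]\}_{i=1}^{n_a}$ and $B=\{[x_i^b,y_i^b]\}_{i=1}^{n_b}$ be persistence barcodes in $\mathcal{B}_F$ with $L_a,L_b>0$. If $r_\infty(A,B)\le 1/4$, then $$\|S(A)-S(B)\|_1\le -2L_{\min}\,r_\infty(A,B)\log\big(2r_\infty(A,B)\big)+2d_\infty(A,B)\log n_{\max}\le 2r_\infty(A,B)\left(-L_{\min}\log\big(2r_\infty(A,B)\big)+L_{\max}\frac{\log n_{\max}}{n_{\max}}\right).$$
   Context: A persistence barcode is a finite multiset of intervals $[x,y]$, $x\le y$; $\mathcal{B}_F$ is the set of barcodes all of whose intervals have finite endpoints. For $A$ write $\ell_i^a=y_i^a-x_i^a$, $L_a=\sum_i\ell_i^a$; similarly for $B$; $n_{\max}=\max\{n_a,n_b\}$, $L_{\max}=\max\{L_a,L_b\}$, $L_{\min}=\min\{L_a,L_b\}$. Bottleneck distance: pad the smaller barcode with zero-length intervals $[t,t]$ so both have $n_{\max}$ intervals, and $d_\infty(A,B)=\min_\gamma\max_i\max\{|x_i^a-x^b_{\gamma(i)}|,|y_i^a-y^b_{\gamma(i)}|\}$ over bijections $\gamma$ (and paddings). Relative error: $r_\infty(A,B)=2n_{\max}d_\infty(A,B)/L_{\max}$. The entropy summary function of $A$ is the step function $S(A):\mathbb{R}\to\mathbb{R}$, $S(A)[t]=-\sum_{i=1}^{n_a}w_i^a(t)\frac{\ell_i^a}{L_a}\log\frac{\ell_i^a}{L_a}$, where $w_i^a(t)=1$ if $x_i^a\le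 t\le y_i^a$ and $0$ otherwise (convention $0\log0=0$). $\|h\|_1=\int_{\mathbb{R}}|h(t)|\,dt$. *)

theory Defs
  imports "HOL-Analysis.Analysis"
begin

(* A barcode is a finite multiset of intervals [x,y], represented as a list of
   endpoint pairs (x,y) (order irrelevant for all notions below). *)
type_synonym barcode = "(real \<times> real) list"

definition is_barcode :: "barcode \<Rightarrow> bool" where
  "is_barcode A \<longleftrightarrow> (\<forall>p\<in>set A. fst p \<le> snd p)"

definition bar_len :: "real \<times> real \<Rightarrow> real" where
  "bar_len p = snd p - fst p"

definition total_len :: "barcode \<Rightarrow> real" where
  "total_len A = (\<Sum>i<length A. bar_len (A ! i))"

definition paddings :: "barcode \<Rightarrow> nat \<Rightarrow> barcode set" where
  "paddings A n = {A @ map (\<lambda>t. (t, t)) ts | ts. length A + length ts = n}"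

definition match_cost :: "nat \<Rightarrow> barcode \<Rightarrow> barcode \<Rightarrow> (nat \<Rightarrow> nat) \<Rightarrow> real" where
  "match_cost n A B \<gamma> = (MAX i\<in>{..<n}.
      max \<bar>fst (A ! i) - fst (B ! \<gamma> i)\<bar> \<bar>snd (A ! i) - snd (B ! \<gamma> i)\<bar>)"

definition d_inf :: "barcode \<Rightarrow> barcode \<Rightarrow> real" where
  "d_inf A B = (let n = max (length A) (length B) in
     Inf {match_cost n A' B' \<gamma> | A' B' \<gamma>.
            A' \<in> paddings A n \<and> B' \<in> paddings B n \<and> \<gamma> permutes {..<n}})"

definition r_inf :: "barcode \<Rightarrow> barcode \<Rightarrow> real" where
  "r_inf A B = 2 * real (max (length A) (length B)) * d_inf A B
                 / max (total_len A) (total_len B)"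

definition entropy_summary :: "barcode \<Rightarrow> real \<Rightarrow> real" where
  "entropy_summary A t = - (\<Sum>i<length A.
      (if fst (A ! i) \<le> t \<and> t \<le> snd (A ! i) then
         (let q = bar_len (A ! i) / total_len A in if q = 0 then 0 else q * ln q)
       else 0))"

definition L1_norm :: "(real \<Rightarrow> real) \<Rightarrow> real" where
  "L1_norm h = (\<integral>t. \<bar>h t\<bar> \<partial>lborel)"

end

theory Submission
  imports Defs
begin


definition hh :: "real \<Rightarrow> real" where "hh x = - x * ln x"

lemma hh0[simp]: "hh 0 = 0" by (simp add: hh_def)
lemma hh1[simp]: "hh 1 = 0" by (simp add: hh_def)

lemma hh_nonneg: "0 \<le> x \<Longrightarrow> x \<le> 1 \<Longrightarrow> 0 \<le> hh x"
  unfolding hh_def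
  by (cases "x = 0") (auto intro: mult_nonneg_nonpos simp: ln_le_zero_iff)

lemma hh_subadd:
  assumes "0 \<le> a" "0 \<le> b" shows "hh (a + b) \<le> hh a + hh b"
proof (cases "a = 0 \<or> b = 0")
  case True then show ?thesis by auto
next
  case False
  then have a: "a > 0" and b: "b > 0" using assms by auto
  have "ln a \<le> ln (a+b)" using a b by simp
  moreover have "ln b \<le> ln (a+b)" using a b by simp
  ultimately have "a * ln a + b * ln b \<le> a * ln (a+b) + b * ln (a+b)"
    using a b by (intro add_mono mult_left_mono) auto
  then show ?thesis unfolding hh_def by (simp add: algebra_simps)
qed

lemma hh_tangent:
  assumes "0 \<le> a" "0 < b" shows "hh a \<le> hh b + (- 1 - ln b) * (a - b)"
proof (cases "a = 0")
  case True then show ?thesis using assms by (simp add: hh_def algebra_simps)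
next
  case False
  then have a: "a > 0" using assms by auto
  have "ln (b / a) \<le> b / a - 1" using a assms by (intro ln_le_minus_one) auto
  then have "a * ln (b/a) \<le> a * (b/a - 1)" using a by (intro mult_left_mono) auto
  also have "\<dots> = b - a" using a by (simp add: field_simps)
  finally have "a * (ln b - ln a) \<le> b - a" using a assms by (simp add: ln_div)
  then show ?thesis unfolding hh_def by (simp add: algebra_simps)
qed

lemma hh_mono:
  assumes "0 \<le> a" "a \<le> b" "b \<le> 1/4" shows "hh a \<le> hh b"
proof (cases "b = 0")
  case True then show ?thesis using assms by auto
next
  case False
  then have b: "b > 0" using assms by auto
  have "exp 1 \<le> (4::real)" using exp_le by simp
  then have "1 \<le> ln (4::real)" by (simp add: ln_ge_iff)
  have "ln b \<le> ln (1/4)" using b assms by simp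
  also have "\<dots> = - ln 4" by (simp add: ln_div)
  finally have "- 1 - ln b \<ge> 0" using \<open>1 \<le> ln 4\<close> by simp
  then have "(- 1 - ln b) * (a - b) \<le> 0" using assms by (intro mult_nonneg_nonpos) auto
  then show ?thesis using hh_tangent[OF assms(1) b] by simp
qed

lemma hh_double:
  assumes "0 \<le> r" "r \<le> 1/4" shows "hh r \<le> hh (2*r)"
proof (cases "r = 0")
  case True then show ?thesis by simp
next
  case False
  then have r: "r > 0" using assms by auto
  have "ln (4 * r) \<le> 0" using r assms by simp
  moreover have "ln (4*r) = ln 2 + ln (2*r)" using r ln_mult[of 2 "2*r"] by simp
  moreover have "ln (2*r) = ln 2 + ln r" using r by (simp add: ln_mult)
  ultimately have "ln (2*r) * 2 \<le> ln r" by simp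
  then have "r * (ln (2*r) * 2) \<le> r * ln r" using r by (intro mult_left_mono) auto
  then show ?thesis unfolding hh_def by (simp add: algebra_simps)
qed

lemma phi_decr:
  assumes "0 \<le> p" "p \<le> q" "q \<le> 1" shows "hh p - hh q \<le> (q^2 - p^2)/2"
proof (cases "p = 0")
  case True
  have "q * ln q \<le> 0" using assms by (cases "q = 0") (auto intro: mult_nonneg_nonpos)
  moreover have "0 \<le> q * q" using assms by simp
  ultimately have "q * ln q * 2 \<le> q * q" by linarith
  then show ?thesis using True assms unfolding hh_def by (simp add: power2_eq_square divide_simps)
next
  case False
  then have p: "p > 0" using assms by auto
  let ?f = "\<lambda>t::real. t * ln t - t^2/2"
  have "?f p \<ge> ?f q"
  proof (rule DERIV_nonpos_imp_nonincreasing[OF assms(2)])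
    fix x assume x: "p \<le> x" "x \<le> q"
    then have x0: "x > 0" using p by auto
    have "DERIV ?f x :> (ln x + 1 - x)"
      using x0 by (auto intro!: derivative_eq_intros simp: field_simps power2_eq_square)
    moreover have "ln x + 1 - x \<le> 0" using ln_le_minus_one[OF x0] by simp
    ultimately show "\<exists>y. DERIV ?f x :> y \<and> y \<le> 0" by blast
  qed
  then show ?thesis unfolding hh_def by (simp add: algebra_simps)
qed

lemma ln2_ge: "ln (2::real) \<ge> 2/3"
proof -
  have "exp (1/12::real) \<le> 1 + 1/12 + (1/12)^2" by (rule exp_bound) auto
  then have e: "exp (1/12::real) \<le> 157/144" by (simp add: power2_eq_square)
  have "exp (2/3::real) = exp (1/12) ^ 8" by (simp add: exp_of_nat_mult[symmetric])
  also have "\<dots> \<le> (157/144) ^ 8" by (rule power_mono[OF e]) simp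
  also have "\<dots> \<le> 2" by (simp add: power_divide)
  finally show ?thesis using ln_ge_iff[of 2 "2/3"] by simp
qed


lemma T_ge1: assumes "0 < r" "r \<le> 1/4" shows "2 * r * ln 2 \<le> hh (2*r)"
proof -
  have "ln (4*r) \<le> 0" using assms by simp
  moreover have "ln (4*r) = ln 2 + ln (2*r)" using assms ln_mult[of 2 "2*r"] by simp
  ultimately have "ln 2 \<le> - ln (2*r)" by simp
  then have "2*r*ln 2 \<le> 2*r*(- ln (2*r))" using assms by (intro mult_left_mono) auto
  then show ?thesis unfolding hh_def by simp
qed

lemma T_ge2: assumes "0 < r" "r \<le> 1/5" shows "3/2 * r \<le> hh (2*r)"
proof -
  have "ln (4/5::real) \<le> 4/5 - 1" by (rule ln_le_minus_one) simp
  moreover have "ln (4/5::real) = - ln (5/4)" by (simp add: ln_div)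
  ultimately have a: "ln (5/4::real) \<ge> 1/5" by simp
  have "ln (5/2::real) = ln 2 + ln (5/4)" using ln_mult[of 2 "5/4"] by simp
  then have b: "ln (5/2::real) \<ge> 3/4" using a ln2_ge by simp
  have "ln (2*r) \<le> ln (2/5)" using assms by simp
  also have "ln (2/5::real) = - ln (5/2)" by (simp add: ln_div)
  finally have "3/4 \<le> - ln (2*r)" using b by simp
  then have "2*r*(3/4) \<le> 2*r*(- ln (2*r))" using assms by (intro mult_left_mono) auto
  then show ?thesis unfolding hh_def by simp
qed

lemma ln2_le1: "ln (2::real) \<le> 1" using ln_le_minus_one[of 2] by simp

lemma per_term:
  assumes p: "0 \<le> p" "p \<le> 1" and q: "0 \<le> q" "q \<le> 1" and r: "0 \<le> r" "r \<le> 1/4"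
    and up: "p \<le> q + r/2" and lo: "q - r/2 - q*r \<le> p"
  shows "\<bar>hh p - hh q\<bar> \<le> hh (2*r)"
proof (cases "r = 0")
  case True
  then have "p = q" using up lo by simp
  then show ?thesis using True by simp
next
  case False
  then have r0: "r > 0" using r by auto
  have T1: "2 * r * ln 2 \<le> hh (2*r)" using T_ge1 r0 r by auto
  have l2: "2/3 \<le> ln (2::real)" by (rule ln2_ge)
  have "2 * r * (2/3) \<le> 2 * r * ln 2" using l2 r0 by (intro mult_left_mono) auto
  then have T3: "4/3 * r \<le> hh (2*r)" using T1 by simp
  have hr: "hh r \<le> hh (2*r)" using hh_double r by auto
  show ?thesis
  proof (cases "q \<le> p")
    case True
    define s where "s = p - q"
    have s: "0 \<le> s" "s \<le> r/2" using True up s_def by auto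
    have "hh p \<le> hh q + hh s" using hh_subadd[of q s] q s s_def by simp
    moreover have "hh s \<le> hh r" using s r by (intro hh_mono) auto
    moreover have "hh q - hh p \<le> (p^2 - q^2)/2" using phi_decr[of q p] True p q by simp
    moreover have "(p^2 - q^2)/2 = s * (p + q)/2" unfolding s_def by (simp add: power2_eq_square algebra_simps)
    moreover have "s * ((p+q)/2) \<le> s * 1" using s p q True by (intro mult_left_mono) auto
    ultimately show ?thesis using hr T3 s r0 by linarith
  next
    case False
    define s where "s = q - p"
    have s: "0 \<le> s" "s \<le> r/2 + q * r" using False lo s_def by auto
    have qr1: "q * r \<le> 1 * r" using q r by (intro mult_right_mono) auto
    have dec: "hh p - hh q \<le> hh (2*r)"
    proof -
      have d: "hh p - hh q \<le> (q^2 - p^2)/2" using phi_decr[of p q] False p q by simp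
      show ?thesis
      proof (cases "r \<le> 1/5")
        case True
        have "(q^2 - p^2)/2 = s * ((q+p)/2)" unfolding s_def by (simp add: power2_eq_square algebra_simps)
        also have "\<dots> \<le> s * 1" using s p q by (intro mult_left_mono) auto
        also have "\<dots> \<le> 3/2 * r" using s qr1 by simp
        finally show ?thesis using d T_ge2[OF r0 True] by linarith
      next
        case False
        define S where "S = r/2 + q*r"
        show ?thesis
        proof (cases "S \<le> q")
          case True
          have pS: "q - S \<le> p" using lo S_def by simp
          have "0 \<le> q - S" using True by simp
          then have "(q - S)^2 \<le> p^2" using pS by (intro power_mono) auto
          then have e: "S*S + q*q \<le> p*p + 2*(S*q)" by (simp add: power2_eq_square algebra_simps)
          have "(q^2 - p^2)/2 = (q*q - p*p)/2" by (simp add: power2_eq_square)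
          moreover have "S * (q - S / 2) = ((2 * (S*q)) - S * S) / 2" by (simp add: algebra_simps)
          ultimately have "(q^2 - p^2)/2 \<le> S * (q - S/2)" using e by (simp add: divide_right_mono)
          also have "\<dots> = r * ((1/2+q) * q - r/2 * (1/2+q)^2)" unfolding S_def
            by (simp add: power2_eq_square algebra_simps)
          also have "\<dots> \<le> r * ((1/2+q) * q - 1/10 * (1/2+q)^2)"
          proof (intro mult_left_mono)
            have "1/10 * (1/2+q)^2 \<le> r/2 * (1/2+q)^2" using False by (intro mult_right_mono) auto
            then show "(1/2+q) * q - r/2 * (1/2+q)^2 \<le> (1/2+q) * q - 1/10 * (1/2+q)^2" by simp
          qed (use r0 in auto)
          also have "\<dots> \<le> r * (4/3)"
          proof (intro mult_left_mono)
            have "q*q \<le> 1" using q by (simp add: mult_le_one)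
            then show "(1/2+q) * q - 1/10 * (1/2+q)^2 \<le> 4/3" using q
              by (simp add: power2_eq_square algebra_simps)
          qed (use r0 in auto)
          finally show ?thesis using d T3 by linarith
        next
          case False
          then have "q * (1 - r) \<le> r/2" unfolding S_def by (simp add: algebra_simps)
          moreover have "r/2 \<le> 2*r/3 * (1 - r)"
          proof -
            have "r*r \<le> r*(1/4)" using r by (intro mult_left_mono) auto
            then show ?thesis by (simp add: algebra_simps)
          qed
          ultimately have "q * (1-r) \<le> 2*r/3 * (1-r)" by simp
          then have qr: "q \<le> 2*r/3" using r by simp
          have "(q^2 - p^2)/2 \<le> q^2/2" using p by simp
          also have "\<dots> \<le> q/2"
          proof -
            have "q*q \<le> q*1" using q by (intro mult_left_mono) auto
            then show ?thesis by (simp add: power2_eq_square)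
          qed
          finally show ?thesis using d qr T3 r0 by linarith
        qed
      qed
    qed
    have inc: "hh q - hh p \<le> hh (2*r)"
    proof (cases "q \<le> 1/2")
      case True
      have "q * r \<le> 1/2 * r" using True r by (intro mult_right_mono) auto
      then have "s \<le> r" using s by simp
      have "hh q \<le> hh p + hh s" using hh_subadd[of p s] p s s_def by simp
      moreover have "hh s \<le> hh r" using s \<open>s \<le> r\<close> r by (intro hh_mono) auto
      ultimately show ?thesis using hr by linarith
    next
      case False
      have "q * (1 - r) \<ge> 1/2 * (1 - r)" using False r by (intro mult_right_mono) auto
      then have "1/2 - 1/2 * r \<le> q - q * r" by (simp only: right_diff_distrib mult_1_right)
      then have p4: "p \<ge> 1/4" using lo r by linarith
      then have pp: "p > 0" by simp
      have t: "hh q \<le> hh p + (- 1 - ln p) * (q - p)" using hh_tangent[OF q(1) pp] .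
      have "ln p \<ge> ln (1/4)" using p4 by simp
      moreover have "ln (1/4::real) = - (2 * ln 2)"
        using ln_mult[of 2 2] by (simp add: ln_div)
      ultimately have c: "- 1 - ln p \<le> 2 * ln 2 - 1" by simp
      have s15: "s \<le> 3/2 * r" using s qr1 by simp
      have "(- 1 - ln p) * s \<le> (2 * ln 2 - 1) * s" using c s by (intro mult_right_mono) auto
      also have "\<dots> \<le> (2 * ln 2 - 1) * (3/2 * r)" using s15 l2 by (intro mult_left_mono) auto
      also have "\<dots> \<le> 2 * r * ln 2"
      proof -
        have l: "r * ln 2 \<le> r" using ln2_le1 r0 mult_left_mono[of "ln 2" 1 r] by simp
        have "(2 * ln 2 - 1) * (3/2 * r) = 3 * (r * ln 2) - 3/2 * r" by (simp add: algebra_simps)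
        also have "\<dots> \<le> 2 * (r * ln 2)" using l r0 by linarith
        also have "\<dots> = 2 * r * ln 2" by simp
        finally show ?thesis .
      qed
      finally show ?thesis using t T1 s_def by simp
    qed
    show ?thesis using dec inc by linarith
  qed
qed


lemma entropy_le_ln:
  fixes p :: "nat \<Rightarrow> real"
  assumes "n > 0" "\<And>i. i < n \<Longrightarrow> 0 \<le> p i" "(\<Sum>i<n. p i) = 1"
  shows "(\<Sum>i<n. hh (p i)) \<le> ln n"
proof -
  have "hh (p i) - p i * ln n \<le> 1 / n - p i" if i: "i < n" for i
  proof (cases "p i = 0")
    case True then show ?thesis using assms by simp
  next
    case False
    have "p i \<ge> 0" using assms(2) i by simp
    then have pi: "p i > 0" using False by linarith
    have "ln (1 / (n * p i)) \<le> 1 / (n * p i) - 1" using pi assms by (intro ln_le_minus_one) auto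
    then have "p i * ln (1 / (n * p i)) \<le> p i * (1 / (n * p i) - 1)"
      using pi by (intro mult_left_mono) auto
    moreover have "ln (1 / (n * p i)) = - ln n - ln (p i)" using pi assms
      by (simp add: ln_div ln_mult)
    moreover have "p i * (1 / (n * p i) - 1) = 1/n - p i" using pi by (simp add: field_simps)
    ultimately show ?thesis unfolding hh_def by (simp add: algebra_simps)
  qed
  then have "(\<Sum>i<n. hh (p i) - p i * ln n) \<le> (\<Sum>i<n. 1 / n - p i)" by (intro sum_mono) auto
  also have "\<dots> = 0" using assms by (simp add: sum_subtractf)
  finally have "(\<Sum>i<n. hh (p i)) - (\<Sum>i<n. p i) * ln n \<le> 0" by (simp add: sum_subtractf sum_distrib_right)
  then show ?thesis using assms by simp
qed

lemma integral_ind_Icc: "a \<le> b \<Longrightarrow> (\<integral>t. indicator {a..b} t \<partial>lborel) = (b - a :: real)"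
  by simp

lemma integrable_ind_Icc[simp]: "integrable lborel (indicator {a..b} :: real \<Rightarrow> real)"
  by (rule integrable_real_indicator) (auto simp: emeasure_lborel_Icc_eq)

lemma ptwise:
  fixes \<alpha> \<beta> x y x' y' t :: real
  assumes "0 \<le> \<alpha>"
  shows "\<bar>\<alpha> * indicator {x..y} t - \<beta> * indicator {x'..y'} t\<bar>
    \<le> \<alpha> * (indicator {min x x'..max x x'} t + indicator {min y y'..max y y'} t)
       + \<bar>\<alpha> - \<beta>\<bar> * indicator {x'..y'} t"
  using assms by (auto simp: indicator_def)

lemma L1_bound:
  fixes \<alpha> \<beta> x y x' y' :: "nat \<Rightarrow> real"
  assumes "\<And>i. i < n \<Longrightarrow> 0 \<le> \<alpha> i" "\<And>i. i < n \<Longrightarrow> x' i \<le> y' i"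
  shows "L1_norm (\<lambda>t. \<Sum>i<n. \<alpha> i * indicator {x i..y i} t - \<beta> i * indicator {x' i..y' i} t)
     \<le> (\<Sum>i<n. \<alpha> i * (\<bar>x i - x' i\<bar> + \<bar>y i - y' i\<bar>) + \<bar>\<alpha> i - \<beta> i\<bar> * (y' i - x' i))"
proof -
  define F where "F t = (\<Sum>i<n. \<alpha> i * (indicator {min (x i) (x' i)..max (x i) (x' i)} t
        + indicator {min (y i) (y' i)..max (y i) (y' i)} t) + \<bar>\<alpha> i - \<beta> i\<bar> * indicator {x' i..y' i} t)" for t
  have intF: "integrable lborel F" unfolding F_def by (auto intro!: integrable_sum)
  have "L1_norm (\<lambda>t. \<Sum>i<n. \<alpha> i * indicator {x i..y i} t - \<beta> i * indicator {x' i..y' i} t) \<le> integral\<^sup>L lborel F"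
    unfolding L1_norm_def
  proof (rule integral_mono'[OF intF])
    fix t :: real
    have "\<bar>\<Sum>i<n. \<alpha> i * indicator {x i..y i} t - \<beta> i * indicator {x' i..y' i} t\<bar>
       \<le> (\<Sum>i<n. \<bar>\<alpha> i * indicator {x i..y i} t - \<beta> i * indicator {x' i..y' i} t\<bar>)" by (rule sum_abs)
    also have "\<dots> \<le> F t" unfolding F_def using assms by (intro sum_mono ptwise) auto
    finally show "\<bar>\<Sum>i<n. \<alpha> i * indicator {x i..y i} t - \<beta> i * indicator {x' i..y' i} t\<bar> \<le> F t" .
    show "0 \<le> F t" unfolding F_def using assms by (intro sum_nonneg add_nonneg_nonneg mult_nonneg_nonneg) auto
  qed
  also have "integral\<^sup>L lborel F = (\<Sum>i<n. \<alpha> i * (\<bar>x i - x' i\<bar> + \<bar>y i - y' i\<bar>) + \<bar>\<alpha> i - \<beta> i\<bar> * (y' i - x' i))"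
    unfolding F_def
  proof (subst Bochner_Integration.integral_sum[where I="{..<n}" and f="\<lambda>i t. \<alpha> i * (indicator {min (x i) (x' i)..max (x i) (x' i)} t
        + indicator {min (y i) (y' i)..max (y i) (y' i)} t) + \<bar>\<alpha> i - \<beta> i\<bar> * indicator {x' i..y' i} t"])
    show "\<And>i. i \<in> {..<n} \<Longrightarrow> integrable lborel (\<lambda>t. \<alpha> i * (indicator {min (x i) (x' i)..max (x i) (x' i)} t
        + indicator {min (y i) (y' i)..max (y i) (y' i)} t) + \<bar>\<alpha> i - \<beta> i\<bar> * indicator {x' i..y' i} t)"
      by auto
    show "(\<Sum>i<n. \<integral>t. \<alpha> i * (indicator {min (x i) (x' i)..max (x i) (x' i)} t
        + indicator {min (y i) (y' i)..max (y i) (y' i)} t) + \<bar>\<alpha> i - \<beta> i\<bar> * indicator {x' i..y' i} t \<partial>lborel)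
      = (\<Sum>i<n. \<alpha> i * (\<bar>x i - x' i\<bar> + \<bar>y i - y' i\<bar>) + \<bar>\<alpha> i - \<beta> i\<bar> * (y' i - x' i))"
    proof (intro sum.cong refl)
      fix i assume i: "i \<in> {..<n}"
      have e1: "(\<integral>t. indicator {min a b..max a b} t \<partial>lborel) = \<bar>a - b\<bar>" for a b :: real
        by (simp add: max_def min_def abs_if)
      have "(\<integral>t. \<alpha> i * (indicator {min (x i) (x' i)..max (x i) (x' i)} t
        + indicator {min (y i) (y' i)..max (y i) (y' i)} t) + \<bar>\<alpha> i - \<beta> i\<bar> * indicator {x' i..y' i} t \<partial>lborel)
        = \<alpha> i * ((\<integral>t. indicator {min (x i) (x' i)..max (x i) (x' i)} t \<partial>lborel)
           + (\<integral>t. indicator {min (y i) (y' i)..max (y i) (y' i)} t \<partial>lborel))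
          + \<bar>\<alpha> i - \<beta> i\<bar> * (\<integral>t. indicator {x' i..y' i} t \<partial>lborel)"
        by (simp add: Bochner_Integration.integral_add)
      also have "\<dots> = \<alpha> i * (\<bar>x i - x' i\<bar> + \<bar>y i - y' i\<bar>) + \<bar>\<alpha> i - \<beta> i\<bar> * (y' i - x' i)"
        using assms(2)[of i] i by (simp only: e1) simp
      finally show "(\<integral>t. \<alpha> i * (indicator {min (x i) (x' i)..max (x i) (x' i)} t
        + indicator {min (y i) (y' i)..max (y i) (y' i)} t) + \<bar>\<alpha> i - \<beta> i\<bar> * indicator {x' i..y' i} t \<partial>lborel)
        = \<alpha> i * (\<bar>x i - x' i\<bar> + \<bar>y i - y' i\<bar>) + \<bar>\<alpha> i - \<beta> i\<bar> * (y' i - x' i)" .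
    qed
  qed
  finally show ?thesis .
qed


lemma es_alt: "entropy_summary A t =
   (\<Sum>i<length A. hh (bar_len (A!i) / total_len A) * indicator {fst (A!i)..snd (A!i)} t)"
  unfolding entropy_summary_def
  by (subst sum_negf[symmetric], intro sum.cong refl) (simp add: hh_def indicator_def Let_def)

lemma core:
  fixes P Q :: barcode and \<sigma> :: "nat \<Rightarrow> nat" and n :: nat and c r :: real
  assumes lP: "length P = n" and lQ: "length Q = n" and n1: "n \<ge> 1"
    and bP: "is_barcode P" and bQ: "is_barcode Q" and \<sigma>: "\<sigma> permutes {..<n}"
    and cost: "\<And>i. i < n \<Longrightarrow> \<bar>fst (P!i) - fst (Q!\<sigma> i)\<bar> \<le> c \<and> \<bar>snd (P!i) - snd (Q!\<sigma> i)\<bar> \<le> c"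
    and LQ: "total_len Q > 0" and LQP: "total_len Q \<le> total_len P"
    and rdef: "r = 2 * n * c / total_len P" and r4: "r \<le> 1/4"
  shows "L1_norm (\<lambda>t. entropy_summary P t - entropy_summary Q t) \<le> total_len Q * hh (2*r) + 2*c*ln n"
proof -
  define L where "L = total_len P"
  define M where "M = total_len Q"
  have L0: "L > 0" and M0: "M > 0" and MleL: "M \<le> L" using LQ LQP unfolding L_def M_def by auto
  define l where "l i = bar_len (P!i)" for i
  define l' where "l' i = bar_len (Q!\<sigma> i)" for i
  have si: "\<sigma> i < n" if "i < n" for i using permutes_in_image[OF \<sigma>, of i] that by simp
  have l0: "0 \<le> l i" if "i < n" for i using bP that lP unfolding l_def bar_len_def is_barcode_def by auto
  have l'0: "0 \<le> l' i" if "i < n" for i using bQ si[OF that] lQ unfolding l'_def bar_len_def is_barcode_def by auto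
  have sumL: "(\<Sum>i<n. l i) = L" unfolding L_def total_len_def l_def lP ..
  have sumM: "(\<Sum>i<n. l' i) = M"
    unfolding M_def total_len_def l'_def lQ using sum.permute[OF \<sigma>, of "\<lambda>j. bar_len (Q!j)"] by (simp add: comp_def)
  have c0: "0 \<le> c" using cost[of 0] n1 by auto
  have r0: "0 \<le> r" unfolding rdef using c0 LQ LQP by auto
  define p where "p i = l i / L" for i
  define q where "q i = l' i / M" for i
  have lL: "l i \<le> L" if "i < n" for i
    unfolding sumL[symmetric] using that l0 by (intro member_le_sum) auto
  have l'M: "l' i \<le> M" if "i < n" for i
    unfolding sumM[symmetric] using that l'0 by (intro member_le_sum) auto
  have p01: "0 \<le> p i \<and> p i \<le> 1" if "i < n" for i
    unfolding p_def using l0[OF that] lL[OF that] L0 by auto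
  have q01: "0 \<le> q i \<and> q i \<le> 1" if "i < n" for i
    unfolding q_def using l'0[OF that] l'M[OF that] M0 by auto
  have esP: "entropy_summary P t = (\<Sum>i<n. hh (p i) * indicator {fst (P!i)..snd (P!i)} t)" for t
    unfolding es_alt p_def l_def L_def lP ..
  have esQ: "entropy_summary Q t = (\<Sum>i<n. hh (q i) * indicator {fst (Q!\<sigma> i)..snd (Q!\<sigma> i)} t)" for t
    unfolding es_alt q_def l'_def M_def lQ
    using sum.permute[OF \<sigma>, of "\<lambda>j. hh (bar_len (Q!j) / total_len Q) * indicator {fst (Q!j)..snd (Q!j)} t"]
    by (simp add: comp_def)
  have diff: "(\<lambda>t. entropy_summary P t - entropy_summary Q t) = (\<lambda>t. \<Sum>i<n. hh (p i) * indicator {fst (P!i)..snd (P!i)} t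
      - hh (q i) * indicator {fst (Q!\<sigma> i)..snd (Q!\<sigma> i)} t)"
    unfolding esP esQ by (simp add: sum_subtractf)
  have pt: "\<bar>hh (p i) - hh (q i)\<bar> \<le> hh (2*r)" if i: "i < n" for i
  proof (cases "n = 1")
    case True
    then have "i = 0" "\<sigma> i = 0" using i si[OF i] by auto
    then have "l i = L" "l' i = M" using sumL sumM True by auto
    then have "p i = 1" "q i = 1" unfolding p_def q_def using L0 M0 by auto
    moreover have "0 \<le> hh (2*r)" using r0 r4 by (intro hh_nonneg) auto
    ultimately show ?thesis by simp
  next
    case False
    then have n2: "n \<ge> 2" using n1 by simp
    have d: "\<bar>l i - l' i\<bar> \<le> 2 * c" using cost[OF i] unfolding l_def l'_def bar_len_def by auto
    have "L - M = (\<Sum>j<n. l j - l' j)" using sumL sumM by (simp add: sum_subtractf)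
    also have "\<dots> \<le> of_nat (card {..<n}) * (2*c)"
    proof (rule sum_bounded_above)
      fix j assume "j \<in> {..<n}"
      then have "\<bar>fst (P!j) - fst (Q!\<sigma> j)\<bar> \<le> c" "\<bar>snd (P!j) - snd (Q!\<sigma> j)\<bar> \<le> c" using cost by auto
      then have "fst (Q!\<sigma> j) - fst (P!j) \<le> c" "snd (P!j) - snd (Q!\<sigma> j) \<le> c" by linarith+
      then show "l j - l' j \<le> 2 * c" unfolding l_def l'_def bar_len_def by linarith
    qed
    finally have LM: "L - M \<le> n * (2*c)" by simp
    define e where "e = (l i - l' i) / L"
    define \<theta> where "\<theta> = (L - M) / L"
    have pq: "p i - q i = e - q i * \<theta>"
    proof -
      have "q i * \<theta> = l' i / M - l' i / L" unfolding q_def \<theta>_def using L0 M0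
        by (simp add: divide_simps) (simp add: algebra_simps)
      moreover have "e = l i / L - l' i / L" unfolding e_def by (simp add: diff_divide_distrib)
      ultimately show ?thesis unfolding p_def q_def by simp
    qed
    have "\<bar>e\<bar> \<le> 2 * c / L" unfolding e_def using d L0 by (simp add: abs_div divide_right_mono)
    moreover have "2 * c / L \<le> r / 2"
    proof -
      have "2 * c \<le> n * c" using n2 c0 by (intro mult_right_mono) auto
      then show ?thesis unfolding rdef L_def[symmetric] using L0 by (simp add: divide_right_mono)
    qed
    moreover have "0 \<le> \<theta>" unfolding \<theta>_def using MleL L0 by simp
    moreover have "\<theta> \<le> r" unfolding \<theta>_def rdef L_def[symmetric] using LM L0
      by (simp add: divide_right_mono algebra_simps)
    moreover have "0 \<le> q i * \<theta>" using q01[OF i] \<open>0 \<le> \<theta>\<close> by simp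
    moreover have "q i * \<theta> \<le> q i * r" using q01[OF i] \<open>\<theta> \<le> r\<close> by (intro mult_left_mono) auto
    ultimately have up: "p i \<le> q i + r/2" and lo: "q i - r/2 - q i * r \<le> p i"
    proof -
      define k where "k = 2 * c / L"
      assume a: "\<bar>e\<bar> \<le> 2 * c / L" "2 * c / L \<le> r / 2" "0 \<le> \<theta>" "\<theta> \<le> r" "0 \<le> q i * \<theta>" "q i * \<theta> \<le> q i * r"
      then have "\<bar>e\<bar> \<le> k" "k \<le> r/2" unfolding k_def by auto
      then have "e \<le> k" "- k \<le> e" by linarith+
      then show "p i \<le> q i + r/2" "q i - r/2 - q i * r \<le> p i" using pq a \<open>k \<le> r/2\<close> by linarith+
    qed
    show ?thesis using per_term[OF _ _ _ _ r0 r4 up lo] p01[OF i] q01[OF i] by auto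
  qed
  have "L1_norm (\<lambda>t. entropy_summary P t - entropy_summary Q t)
     \<le> (\<Sum>i<n. hh (p i) * (\<bar>fst (P!i) - fst (Q!\<sigma> i)\<bar> + \<bar>snd (P!i) - snd (Q!\<sigma> i)\<bar>)
          + \<bar>hh (p i) - hh (q i)\<bar> * (snd (Q!\<sigma> i) - fst (Q!\<sigma> i)))"
    unfolding diff
  proof (rule L1_bound)
    show "\<And>i. i < n \<Longrightarrow> 0 \<le> hh (p i)" using p01 hh_nonneg by auto
    show "\<And>i. i < n \<Longrightarrow> fst (Q ! \<sigma> i) \<le> snd (Q ! \<sigma> i)"
      using bQ si lQ unfolding is_barcode_def by auto
  qed
  also have "\<dots> \<le> (\<Sum>i<n. hh (p i) * (2 * c) + hh (2*r) * l' i)"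
  proof (intro sum_mono add_mono)
    fix i assume i: "i \<in> {..<n}"
    show "hh (p i) * (\<bar>fst (P!i) - fst (Q!\<sigma> i)\<bar> + \<bar>snd (P!i) - snd (Q!\<sigma> i)\<bar>) \<le> hh (p i) * (2 * c)"
      using cost[of i] i p01[of i] hh_nonneg by (intro mult_left_mono) auto
    show "\<bar>hh (p i) - hh (q i)\<bar> * (snd (Q!\<sigma> i) - fst (Q!\<sigma> i)) \<le> hh (2*r) * l' i"
      unfolding l'_def bar_len_def using pt[of i] i l'0[of i] unfolding l'_def bar_len_def
      by (intro mult_right_mono) auto
  qed
  also have "\<dots> = 2 * c * (\<Sum>i<n. hh (p i)) + hh (2*r) * M"
    by (simp add: sum.distrib sum_distrib_left[symmetric] sum_distrib_right[symmetric] sumM)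
  also have "\<dots> \<le> 2 * c * ln n + hh (2*r) * M"
  proof -
    have "(\<Sum>i<n. hh (p i)) \<le> ln n"
    proof (rule entropy_le_ln)
      show "0 < n" using n1 by simp
      show "\<And>i. i < n \<Longrightarrow> 0 \<le> p i" using p01 by auto
      show "(\<Sum>i<n. p i) = 1" unfolding p_def using sumL L0 by (simp add: sum_divide_distrib[symmetric])
    qed
    then show ?thesis using c0 by (simp add: mult_left_mono)
  qed
  finally show ?thesis unfolding M_def by (simp add: algebra_simps)
qed


abbreviation pads :: "real list \<Rightarrow> barcode" where "pads ts \<equiv> map (\<lambda>t. (t, t)) ts"

lemma sum_nth_list: "(\<Sum>i<length xs. f (xs!i)) = sum_list (map f xs)"
  by (simp add: sum_list_sum_nth atLeast0LessThan)

lemma total_len_pad: "total_len (A @ pads ts) = total_len A"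
  unfolding total_len_def sum_nth_list by (simp add: bar_len_def comp_def)

lemma es_pad: "entropy_summary (A @ pads ts) t = entropy_summary A t"
proof -
  have "entropy_summary (A @ pads ts) t =
    sum_list (map (\<lambda>a. hh (bar_len a / total_len A) * indicator {fst a..snd a} t) (A @ pads ts))"
    unfolding es_alt total_len_pad
    using sum_nth_list[where xs="A @ pads ts" and f="\<lambda>a. hh (bar_len a / total_len A) * indicator {fst a..snd a} t"]
    by simp
  also have "\<dots> = sum_list (map (\<lambda>a. hh (bar_len a / total_len A) * indicator {fst a..snd a} t) A)"
    by (simp add: bar_len_def comp_def)
  also have "\<dots> = entropy_summary A t"
    unfolding es_alt using sum_nth_list[where xs=A and f="\<lambda>a. hh (bar_len a / total_len A) * indicator {fst a..snd a} t"]
    by simp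
  finally show ?thesis .
qed

lemma barcode_pad: "is_barcode A \<Longrightarrow> is_barcode (A @ pads ts)"
  unfolding is_barcode_def by auto

lemma mid_le:
  fixes x y t :: real assumes "x \<le> y"
  shows "max \<bar>x - (x+y)/2\<bar> \<bar>y - (x+y)/2\<bar> \<le> max \<bar>x - t\<bar> \<bar>y - t\<bar>"
    and "max \<bar>(x+y)/2 - x\<bar> \<bar>(x+y)/2 - y\<bar> \<le> max \<bar>t - x\<bar> \<bar>t - y\<bar>"
  using assms by (auto simp: max_def abs_if field_simps)


lemma mc_mono:
  fixes n :: nat
  assumes "n > 0" "\<And>i. i < n \<Longrightarrow> g i \<le> (f i :: real)"
  shows "(MAX i\<in>{..<n}. g i) \<le> (MAX i\<in>{..<n}. f i)"
proof (rule Max.boundedI)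
  show "finite (g ` {..<n})" by simp
  show "g ` {..<n} \<noteq> {}" using assms by auto
  fix a assume "a \<in> g ` {..<n}"
  then obtain i where i: "i < n" "a = g i" by auto
  have "f i \<le> (MAX i\<in>{..<n}. f i)" using i by (intro Max_ge) auto
  then show "a \<le> (MAX i\<in>{..<n}. f i)" using assms(2)[OF i(1)] i by linarith
qed

lemma attain:
  assumes bA: "is_barcode A" and bB: "is_barcode B"
    and n: "n = max (length A) (length B)" and n0: "n > 0"
  shows "\<exists>A' B' \<gamma>. A' \<in> paddings A n \<and> B' \<in> paddings B n \<and> \<gamma> permutes {..<n}
            \<and> match_cost n A' B' \<gamma> = d_inf A B"
proof -
  define la where "la = length A"
  define lb where "lb = length B"
  define mp where "mp b = (fst b + snd b)/2" for b :: "real \<times> real"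
  define tA where "tA \<gamma> = map (\<lambda>k. mp (B!(\<gamma>(la+k)))) [0..<n-la]" for \<gamma> :: "nat \<Rightarrow> nat"
  define tB where "tB \<gamma> = map (\<lambda>k. mp (A!(inv \<gamma>(lb+k)))) [0..<n-lb]" for \<gamma> :: "nat \<Rightarrow> nat"
  define AA where "AA \<gamma> = A @ pads (tA \<gamma>)" for \<gamma>
  define BB where "BB \<gamma> = B @ pads (tB \<gamma>)" for \<gamma>
  define Cs where "Cs = {match_cost n A' B' \<gamma> | A' B' \<gamma>. A' \<in> paddings A n \<and> B' \<in> paddings B n \<and> \<gamma> permutes {..<n}}"
  have dinf: "d_inf A B = Inf Cs" unfolding d_inf_def Cs_def Let_def n ..
  have la: "la \<le> n" and lb: "lb \<le> n" and lab: "la = n \<or> lb = n" using n unfolding la_def lb_def by auto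
  have AAin: "AA \<gamma> \<in> paddings A n" for \<gamma>
  proof -
    have "length A + length (tA \<gamma>) = n" using la by (simp add: tA_def la_def)
    then show ?thesis unfolding paddings_def AA_def by blast
  qed
  have BBin: "BB \<gamma> \<in> paddings B n" for \<gamma>
  proof -
    have "length B + length (tB \<gamma>) = n" using lb by (simp add: tB_def lb_def)
    then show ?thesis unfolding paddings_def BB_def by blast
  qed
  have key: "match_cost n (AA \<gamma>) (BB \<gamma>) \<gamma> \<le> match_cost n A' B' \<gamma>"
    if \<gamma>: "\<gamma> permutes {..<n}" and A': "A' \<in> paddings A n" and B': "B' \<in> paddings B n" for \<gamma> A' B'
  proof -
    obtain ts where ts: "A' = A @ pads ts" "la + length ts = n" using A' unfolding paddings_def la_def by auto
    obtain us where us: "B' = B @ pads us" "lb + length us = n" using B' unfolding paddings_def lb_def by auto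
    show ?thesis unfolding match_cost_def
    proof (rule mc_mono[OF n0])
      fix i assume i: "i < n"
      have gi: "\<gamma> i < n" using permutes_in_image[OF \<gamma>, of i] i by simp
      have ig: "inv \<gamma> (\<gamma> i) = i" using permutes_inverses(2)[OF \<gamma>] by simp
      show "max \<bar>fst (AA \<gamma> ! i) - fst (BB \<gamma> ! \<gamma> i)\<bar> \<bar>snd (AA \<gamma> ! i) - snd (BB \<gamma> ! \<gamma> i)\<bar>
          \<le> max \<bar>fst (A' ! i) - fst (B' ! \<gamma> i)\<bar> \<bar>snd (A' ! i) - snd (B' ! \<gamma> i)\<bar>"
      proof (cases "i < la")
        case True
        then have a1: "AA \<gamma> ! i = A ! i" "A' ! i = A ! i" unfolding AA_def ts(1) la_def by (auto simp: nth_append)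
        have xy: "fst (A!i) \<le> snd (A!i)" using bA True unfolding is_barcode_def la_def by auto
        show ?thesis
        proof (cases "\<gamma> i < lb")
          case True
          then have "BB \<gamma> ! \<gamma> i = B ! \<gamma> i" "B' ! \<gamma> i = B ! \<gamma> i" unfolding BB_def us(1) lb_def
            by (auto simp: nth_append)
          then show ?thesis using a1 by simp
        next
          case False
          have "BB \<gamma> ! \<gamma> i = (mp (A!i), mp (A!i))" unfolding BB_def lb_def[symmetric] using False gi ig
            by (simp add: nth_append tB_def lb_def)
          moreover have "B' ! \<gamma> i = (us!(\<gamma> i - lb), us!(\<gamma> i - lb))" unfolding us(1) lb_def[symmetric]
            using False gi us(2) by (simp add: nth_append lb_def)
          ultimately show ?thesis using a1 mid_le(1)[OF xy] unfolding mp_def by simp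
        qed
      next
        case False
        then have lbn: "lb = n" using lab i by auto
        have a1: "BB \<gamma> ! \<gamma> i = B ! \<gamma> i" "B' ! \<gamma> i = B ! \<gamma> i" unfolding BB_def us(1)
          using gi lbn by (auto simp: nth_append lb_def)
        have xy: "fst (B!\<gamma> i) \<le> snd (B!\<gamma> i)" using bB gi lbn unfolding is_barcode_def lb_def by auto
        have "AA \<gamma> ! i = (mp (B!\<gamma> i), mp (B!\<gamma> i))" unfolding AA_def la_def[symmetric] using False i
          by (simp add: nth_append tA_def la_def)
        moreover have "A' ! i = (ts!(i - la), ts!(i - la))" unfolding ts(1) la_def[symmetric]
          using False i ts(2) by (simp add: nth_append la_def)
        ultimately show ?thesis using a1 mid_le(2)[OF xy] unfolding mp_def by simp
      qed
    qed
  qed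
  define G where "G = (\<lambda>\<gamma>. match_cost n (AA \<gamma>) (BB \<gamma>) \<gamma>) ` {\<gamma>. \<gamma> permutes {..<n}}"
  have finG: "finite G" unfolding G_def by (intro finite_imageI finite_permutations) simp
  have neG: "G \<noteq> {}" unfolding G_def using permutes_id by blast
  obtain \<gamma>0 where g0: "\<gamma>0 permutes {..<n}" "Min G = match_cost n (AA \<gamma>0) (BB \<gamma>0) \<gamma>0"
    using Min_in[OF finG neG] unfolding G_def by auto
  have "Inf Cs = Min G"
  proof (rule cInf_eq_minimum)
    show "Min G \<in> Cs" unfolding Cs_def g0(2) using AAin BBin g0(1) by blast
    fix x assume "x \<in> Cs"
    then obtain A' B' \<gamma> where x: "x = match_cost n A' B' \<gamma>" "A' \<in> paddings A n" "B' \<in> paddings B n" "\<gamma> permutes {..<n}"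
      unfolding Cs_def by blast
    have "Min G \<le> match_cost n (AA \<gamma>) (BB \<gamma>) \<gamma>" using finG x(4) unfolding G_def by (intro Min_le) auto
    also have "\<dots> \<le> x" using key[OF x(4) x(2) x(3)] x(1) by simp
    finally show "Min G \<le> x" .
  qed
  then show ?thesis using dinf g0 AAin BBin by metis
qed


theorem theorem7:
  fixes A B :: barcode
  assumes "is_barcode A" and "is_barcode B"
    and "total_len A > 0" and "total_len B > 0"
    and "r_inf A B \<le> 1/4"
  shows "L1_norm (\<lambda>t. entropy_summary A t - entropy_summary B t)
           \<le> - 2 * min (total_len A) (total_len B) * r_inf A B * ln (2 * r_inf A B)
             + 2 * d_inf A B * ln (real (max (length A) (length B)))
       \<and> - 2 * min (total_len A) (total_len B) * r_inf A B * ln (2 * r_inf A B)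
             + 2 * d_inf A B * ln (real (max (length A) (length B)))
           \<le> 2 * r_inf A B * (- min (total_len A) (total_len B) * ln (2 * r_inf A B)
               + max (total_len A) (total_len B)
                 * ln (real (max (length A) (length B))) / real (max (length A) (length B)))"
proof -
  note bA = assms(1) and bB = assms(2) and LA = assms(3) and LB = assms(4) and r4 = assms(5)
  define n where "n = max (length A) (length B)"
  define d where "d = d_inf A B"
  define r where "r = r_inf A B"
  have "A \<noteq> []" using LA by (auto simp: total_len_def)
  then have n0: "n > 0" unfolding n_def by (simp add: less_max_iff_disj)
  obtain A' B' \<gamma> where A': "A' \<in> paddings A n" and B': "B' \<in> paddings B n" and \<gamma>: "\<gamma> permutes {..<n}"
    and mc: "match_cost n A' B' \<gamma> = d"
    using attain[OF bA bB n_def n0] unfolding d_def by blast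
  obtain ts where ts: "A' = A @ pads ts" "length A + length ts = n" using A' unfolding paddings_def by auto
  obtain us where us: "B' = B @ pads us" "length B + length us = n" using B' unfolding paddings_def by auto
  have lA': "length A' = n" and lB': "length B' = n" using ts us by auto
  have bA': "is_barcode A'" and bB': "is_barcode B'" using ts us bA bB barcode_pad by auto
  have tA': "total_len A' = total_len A" and tB': "total_len B' = total_len B" using ts us total_len_pad by auto
  have eA': "entropy_summary A' t = entropy_summary A t" and eB': "entropy_summary B' t = entropy_summary B t" for t
    using ts us es_pad by auto
  have cost: "\<bar>fst (A'!i) - fst (B'!\<gamma> i)\<bar> \<le> d \<and> \<bar>snd (A'!i) - snd (B'!\<gamma> i)\<bar> \<le> d" if i: "i < n" for i
  proof -
    have "max \<bar>fst (A'!i) - fst (B'!\<gamma> i)\<bar> \<bar>snd (A'!i) - snd (B'!\<gamma> i)\<bar> \<le> match_cost n A' B' \<gamma>"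
      unfolding match_cost_def using i by (intro Max_ge) auto
    then show ?thesis using mc by simp
  qed
  have d0: "0 \<le> d" using cost[OF n0] by linarith
  have n1: "n \<ge> 1" using n0 by simp
  have rdef: "r = 2 * n * d / max (total_len A) (total_len B)" by (simp add: r_def r_inf_def n_def d_def)
  have r4': "r \<le> 1/4" using r4 r_def by simp
  have main: "L1_norm (\<lambda>t. entropy_summary A t - entropy_summary B t)
      \<le> min (total_len A) (total_len B) * hh (2*r) + 2 * d * ln n"
  proof (cases "total_len B \<le> total_len A")
    case True
    have "L1_norm (\<lambda>t. entropy_summary A' t - entropy_summary B' t) \<le> total_len B' * hh (2*r) + 2*d*ln n"
      by (rule core[OF lA' lB' n1 bA' bB' \<gamma> cost]) (use LB True tA' tB' rdef r4' in auto)
    then show ?thesis using True unfolding eA' eB' tB' by simp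
  next
    case False
    have \<gamma>': "inv \<gamma> permutes {..<n}" using permutes_inv[OF \<gamma>] .
    have cost': "\<bar>fst (B'!j) - fst (A'!inv \<gamma> j)\<bar> \<le> d \<and> \<bar>snd (B'!j) - snd (A'!inv \<gamma> j)\<bar> \<le> d"
      if j: "j < n" for j
    proof -
      have ij: "inv \<gamma> j < n" using permutes_in_image[OF \<gamma>', of j] j by simp
      have "\<gamma> (inv \<gamma> j) = j" using permutes_inverses(1)[OF \<gamma>] by simp
      then show ?thesis using cost[OF ij] by (simp add: abs_minus_commute)
    qed
    have "L1_norm (\<lambda>t. entropy_summary B' t - entropy_summary A' t) \<le> total_len A' * hh (2*r) + 2*d*ln n"
      by (rule core[OF lB' lA' n1 bB' bA' \<gamma>' cost']) (use LA False tA' tB' rdef r4' in auto)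
    moreover have "L1_norm (\<lambda>t. entropy_summary B' t - entropy_summary A' t)
       = L1_norm (\<lambda>t. entropy_summary A t - entropy_summary B t)"
      unfolding L1_norm_def eA' eB' by (simp add: abs_minus_commute)
    ultimately show ?thesis using False unfolding tA' by simp
  qed
  have hh2: "min (total_len A) (total_len B) * hh (2*r) = - 2 * min (total_len A) (total_len B) * r * ln (2 * r)"
    unfolding hh_def by simp
  have second: "2 * d * ln n \<le> 2 * r * (max (total_len A) (total_len B) * ln n / n)"
  proof -
    have mpos: "max (total_len A) (total_len B) > 0" using LA by simp
    have "2 * r * (max (total_len A) (total_len B) * ln n / n) = 4 * d * ln n"
      unfolding rdef using mpos n0 by (simp add: field_simps)
    moreover have "0 \<le> d * ln n" using d0 n1 by simp
    ultimately show ?thesis by simp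
  qed
  show ?thesis
    using main second unfolding hh2 r_def[symmetric] d_def[symmetric] n_def[symmetric]
    by (simp add: algebra_simps)
qed

end
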